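(* Let $G$ be a co-chordal simple graph with at least one edge, whose vertices are among the variables of $S=\mathbb{K}[x_1,\dots,x_n]$, $\mathbb{K}$ a field. Then $\operatorname{sreg}(S/I(G))\le 1$.
   Context: A graph is chordal if every induced cycle has length 3, and co-chordal if its complement graph is chordal. $I(G)=(xy : \{x,y\}\in E(G))$ is the edge ideal. Stanley regularity: for a squarefree monomial ideal $I\subset S$, a squarefree Stanley decomposition of $S/I$ is a decomposition $S/I=\bigoplus_{i=1}^r u_i\mathbb{K}[Z_i]$ as $\mathbb{K}$-vector spaces, where $Z_i\subseteq\{x_1,\dots,x_n\}$, $u_i$ are (images of) squarefree monomials with $\operatorname{supp}(u_i)\subseteq Z_i$, and each $u_i\mathbb{K}[Z_i]$ is free over $\mathbb{K}[Z_i]$. Its Stanley regularity is $\max_i\deg(u_i)$, and $\operatorname{sreg}(S/I)$ is the minimum over all such decompositions. *)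

theory Defs
  imports Main
begin

text \<open>Variables of S = K[x_1,...,x_n] are identified with the indices 1..n.
A monomial of S is an exponent vector f :: nat \<Rightarrow> nat supported in {1..n}.\<close>

definition monomial_in :: "nat set \<Rightarrow> (nat \<Rightarrow> nat) \<Rightarrow> bool" where
  "monomial_in Z f \<longleftrightarrow> (\<forall>v. v \<notin> Z \<longrightarrow> f v = 0)"

definition simple_graph :: "nat \<Rightarrow> nat set \<Rightarrow> nat set set \<Rightarrow> bool" where
  "simple_graph n V E \<longleftrightarrow> V \<subseteq> {1..n} \<and> (\<forall>e\<in>E. card e = 2 \<and> e \<subseteq> V)"

definition complement_edges :: "nat set \<Rightarrow> nat set set \<Rightarrow> nat set set" where
  "complement_edges V E = {{a, b} | a b. a \<in> V \<and> b \<in> V \<and> a \<noteq> b \<and> {a, b} \<notin> E}"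

definition induced_cycle :: "nat set \<Rightarrow> nat set set \<Rightarrow> nat list \<Rightarrow> bool" where
  "induced_cycle V E cs \<longleftrightarrow> length cs \<ge> 3 \<and> distinct cs \<and> set cs \<subseteq> V \<and>
     (\<forall>i < length cs. \<forall>j < length cs. i \<noteq> j \<longrightarrow>
        ({cs ! i, cs ! j} \<in> E \<longleftrightarrow>
           (j = Suc i mod length cs \<or> i = Suc j mod length cs)))"

definition chordal :: "nat set \<Rightarrow> nat set set \<Rightarrow> bool" where
  "chordal V E \<longleftrightarrow> (\<forall>cs. induced_cycle V E cs \<longrightarrow> length cs = 3)"

definition co_chordal :: "nat set \<Rightarrow> nat set set \<Rightarrow> bool" where
  "co_chordal V E \<longleftrightarrow> chordal V (complement_edges V E)"

text \<open>Standard monomials of S/I(G): monomials of S not divisible by any x_a x_b with {a,b} an edge.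
Their images form a K-basis of S/I(G) (I(G) is a monomial ideal).\<close>
definition std_monomial :: "nat \<Rightarrow> nat set set \<Rightarrow> (nat \<Rightarrow> nat) \<Rightarrow> bool" where
  "std_monomial n E f \<longleftrightarrow> monomial_in {1..n} f \<and> (\<forall>e\<in>E. \<not> (\<forall>v\<in>e. 1 \<le> f v))"

text \<open>Monomials of u K[Z], u a squarefree monomial given by its support.\<close>
definition stanley_piece :: "nat set \<Rightarrow> nat set \<Rightarrow> (nat \<Rightarrow> nat) set" where
  "stanley_piece u Z = {(\<lambda>v. (if v \<in> u then 1 else 0) + m v) | m. monomial_in Z m}"

text \<open>Squarefree Stanley decomposition S/I = \<Oplus> u_i K[Z_i]: each u_i K[Z_i] is free over K[Z_i]
(equivalently: no monomial u_i m, m in K[Z_i], lies in I) and the sum is direct and exhausts S/I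
(equivalently: every standard monomial lies in exactly one piece).\<close>
definition sqfree_stanley_decomp :: "nat \<Rightarrow> nat set set \<Rightarrow> (nat set \<times> nat set) set \<Rightarrow> bool" where
  "sqfree_stanley_decomp n E D \<longleftrightarrow> finite D \<and>
     (\<forall>(u, Z) \<in> D. Z \<subseteq> {1..n} \<and> u \<subseteq> Z \<and> stanley_piece u Z \<subseteq> Collect (std_monomial n E)) \<and>
     (\<forall>f. std_monomial n E f \<longrightarrow> (\<exists>!p. p \<in> D \<and> f \<in> stanley_piece (fst p) (snd p)))"

definition sreg :: "nat \<Rightarrow> nat set set \<Rightarrow> nat" where
  "sreg n E = (LEAST k. \<exists>D. sqfree_stanley_decomp n E D \<and> (\<forall>(u, Z) \<in> D. card u \<le> k))"

end

theory Submission
  imports Defs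
begin

definition adjF :: "nat set set \<Rightarrow> nat \<Rightarrow> nat \<Rightarrow> bool" where
  "adjF F x y \<longleftrightarrow> {x, y} \<in> F"

lemma adjF_sym: "adjF F x y = adjF F y x"
  by (simp add: adjF_def insert_commute)

lemma shortcut:
  assumes "successively R q" "Suc i < k" "k \<le> length q"
    "k < length q \<Longrightarrow> R (q!i) (q!k)" "k = length q \<Longrightarrow> q!i = last q"
  shows "successively R (take (Suc i) q @ drop k q) \<and> take (Suc i) q @ drop k q \<noteq> []
     \<and> hd (take (Suc i) q @ drop k q) = hd q \<and> last (take (Suc i) q @ drop k q) = last q
     \<and> set (take (Suc i) q @ drop k q) \<subseteq> set q \<and> length (take (Suc i) q @ drop k q) < length q"
proof -
  have i: "i < length q" using assms by simp
  have s1: "successively R (take (Suc i) q)"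
    using assms(1) i by (auto simp: successively_conv_nth)
  have s2: "successively R (drop k q)"
    using assms(1) by (auto simp: successively_conv_nth)
  have lt: "last (take (Suc i) q) = q!i" using i by (subst last_conv_nth) auto
  have conn: "drop k q = [] \<or> R (last (take (Suc i) q)) (hd (drop k q))"
  proof (cases "k < length q")
    case True then show ?thesis using assms(4) lt by (simp add: hd_drop_conv_nth)
  qed simp
  have "successively R (take (Suc i) q @ drop k q)"
    using s1 s2 conn by (simp add: successively_append_iff)
  moreover have "hd (take (Suc i) q @ drop k q) = hd q" using i
    by (cases q) auto
  moreover have "last (take (Suc i) q @ drop k q) = last q"
  proof (cases "k < length q")
    case True then show ?thesis by simp
  next
    case False then have "k = length q" using assms by simp
    then show ?thesis using assms(5) lt by simp
  qed
  moreover have "set (take (Suc i) q @ drop k q) \<subseteq> set q"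
    by (auto dest: in_set_takeD in_set_dropD)
  moreover have "length (take (Suc i) q @ drop k q) < length q" using assms by simp
  ultimately show ?thesis using i by auto
qed

definition goodpath :: "nat set set \<Rightarrow> nat set \<Rightarrow> nat \<Rightarrow> nat \<Rightarrow> nat list \<Rightarrow> bool" where
  "goodpath F C x y p \<longleftrightarrow> successively (adjF F) p \<and> p \<noteq> [] \<and> hd p = x \<and> last p = y
     \<and> set p \<subseteq> C \<union> {x, y}"

lemma min_path:
  assumes "goodpath F C x y p" "\<forall>z. {z} \<notin> F"
  shows "\<exists>q. goodpath F C x y q \<and> distinct q \<and>
     (\<forall>i j. i < j \<longrightarrow> j < length q \<longrightarrow> adjF F (q!i) (q!j) \<longrightarrow> j = Suc i)"
proof -
  obtain q where q: "goodpath F C x y q" and qm: "\<And>q'. goodpath F C x y q' \<Longrightarrow> length q \<le> length q'"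
    using ex_has_least_nat[of "goodpath F C x y" p length] assms(1) by blast
  have sq: "successively (adjF F) q" using q by (simp add: goodpath_def)
  have irr: "\<And>z. \<not> adjF F z z" using assms(2) by (simp add: adjF_def)
  have nosc: False if "Suc i < k" "k \<le> length q"
    "k < length q \<Longrightarrow> adjF F (q!i) (q!k)" "k = length q \<Longrightarrow> q!i = last q" for i k
  proof -
    have "goodpath F C x y (take (Suc i) q @ drop k q)"
      using shortcut[OF sq that] q unfolding goodpath_def by blast
    moreover have "length (take (Suc i) q @ drop k q) < length q"
      using shortcut[OF sq that] by blast
    ultimately show False using qm by fastforce
  qed
  have "distinct q"
  proof (rule ccontr)
    assume "\<not> distinct q"
    then obtain i j where ij: "i < j" "j < length q" "q!i = q!j"
      by (metis distinct_conv_nth linorder_neqE_nat)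
    show False
    proof (cases "j = Suc i")
      case True then show ?thesis using successively_nth[OF sq, of i] ij irr by simp
    next
      case False
      show ?thesis
      proof (rule nosc[of i "Suc j"])
        show "Suc i < Suc j" using ij False by simp
        show "Suc j \<le> length q" using ij by simp
        show "Suc j < length q \<Longrightarrow> adjF F (q ! i) (q ! Suc j)"
          using successively_nth[OF sq, of j] ij by simp
        show "Suc j = length q \<Longrightarrow> q ! i = last q"
        proof -
          assume "Suc j = length q" then have "j = length q - 1" by simp
          then show ?thesis using ij by (subst last_conv_nth) auto
        qed
      qed
    qed
  qed
  moreover have "\<forall>i j. i < j \<longrightarrow> j < length q \<longrightarrow> adjF F (q!i) (q!j) \<longrightarrow> j = Suc i"
  proof (intro allI impI, rule ccontr)
    fix i j assume "i < j" "j < length q" "adjF F (q!i) (q!j)" "j \<noteq> Suc i"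
    then show False using nosc[of i j] by simp
  qed
  ultimately show ?thesis using q by blast
qed

lemma cycle:
  assumes d: "distinct q" and l: "length q \<ge> 3"
    and ind: "\<forall>i j. i < j \<longrightarrow> j < length q \<longrightarrow> adjF F (q!i) (q!j) \<longrightarrow> j = Suc i"
    and sq: "successively (adjF F) q"
    and bq: "b \<notin> set q" and bh: "adjF F b (q!0)" and bl: "adjF F b (q!(length q - 1))"
    and bi: "\<forall>t. 0 < t \<longrightarrow> t < length q - 1 \<longrightarrow> \<not> adjF F b (q!t)"
    and U: "set (b # q) \<subseteq> U"
  shows "induced_cycle U F (b # q)"
proof -
  let ?L = "length (b # q)"
  have A: "{(b#q)!i, (b#q)!j} \<in> F \<longleftrightarrow> (j = Suc i mod ?L \<or> i = Suc j mod ?L)"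
    if ij: "i < ?L" "j < ?L" "i \<noteq> j" "i < j" for i j
  proof -
    obtain t where t: "j = Suc t" using ij by (cases j) auto
    show ?thesis
    proof (cases i)
      case 0
      have m1: "Suc i mod ?L = 1" using 0 l by (cases q) auto
      have m2: "Suc j mod ?L = (if t = length q - 1 then 0 else Suc j)"
      proof (cases "t = length q - 1")
        case True then have "Suc j = ?L" using t l by simp
        then have "Suc j mod ?L = 0" by (simp only: mod_self)
        then show ?thesis using True by presburger
      next
        case False then have "Suc j < ?L" using t ij by simp
        then show ?thesis using False by simp
      qed
      have "{(b#q)!i, (b#q)!j} \<in> F \<longleftrightarrow> adjF F b (q!t)" using 0 t by (simp add: adjF_def)
      also have "\<dots> \<longleftrightarrow> t = 0 \<or> t = length q - 1"
      proof
        assume a: "adjF F b (q!t)" show "t = 0 \<or> t = length q - 1"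
        proof (rule ccontr)
          assume "\<not> (t = 0 \<or> t = length q - 1)"
          moreover have "t < length q" using ij(2) unfolding t by simp
          ultimately have "0 < t" "t < length q - 1" by auto
          then show False using bi a by blast
        qed
      next
        assume "t = 0 \<or> t = length q - 1" then show "adjF F b (q!t)" using bh bl by blast
      qed
      finally show ?thesis using m1 m2 0 t by auto
    next
      case (Suc s)
      have st: "s < t" using Suc t ij by simp
      have m1: "Suc i mod ?L = Suc i" using Suc t ij by simp
      have m2: "Suc j mod ?L = (if t = length q - 1 then 0 else Suc j)"
      proof (cases "t = length q - 1")
        case True then have "Suc j = ?L" using t l by simp
        then have "Suc j mod ?L = 0" by (simp only: mod_self)
        then show ?thesis using True by presburger
      next
        case False then have "Suc j < ?L" using t ij by simp
        then show ?thesis using False by simp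
      qed
      have "{(b#q)!i, (b#q)!j} \<in> F \<longleftrightarrow> adjF F (q!s) (q!t)" using Suc t by (simp add: adjF_def)
      also have "\<dots> \<longleftrightarrow> t = Suc s"
      proof
        assume "adjF F (q!s) (q!t)" moreover have "t < length q" using ij(2) unfolding t by simp
        ultimately show "t = Suc s" using ind[rule_format, OF st] by blast
      next
        assume "t = Suc s" then show "adjF F (q!s) (q!t)" using successively_nth[OF sq, of s] ij t by simp
      qed
      finally show ?thesis using m1 m2 Suc t st by auto
    qed
  qed
  have "\<forall>i < ?L. \<forall>j < ?L. i \<noteq> j \<longrightarrow>
        ({(b#q) ! i, (b#q) ! j} \<in> F \<longleftrightarrow> (j = Suc i mod ?L \<or> i = Suc j mod ?L))"
  proof (intro allI impI)
    fix i j assume "i < ?L" "j < ?L" "i \<noteq> j"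
    then show "{(b#q) ! i, (b#q) ! j} \<in> F \<longleftrightarrow> (j = Suc i mod ?L \<or> i = Suc j mod ?L)"
    proof (cases "i < j")
      case True then show ?thesis by (rule A[OF \<open>i < ?L\<close> \<open>j < ?L\<close> \<open>i \<noteq> j\<close>])
    next
      case False
      then have "j < i" using \<open>i \<noteq> j\<close> by simp
      moreover have e: "{(b#q)!i, (b#q)!j} = {(b#q)!j, (b#q)!i}" by (rule insert_commute)
      moreover have "j \<noteq> i" using \<open>i \<noteq> j\<close> by simp
      ultimately have "{(b#q)!j, (b#q)!i} \<in> F \<longleftrightarrow> (i = Suc j mod ?L \<or> j = Suc i mod ?L)"
        using A[OF \<open>j < ?L\<close> \<open>i < ?L\<close>] by blast
      then show ?thesis unfolding e by blast
    qed
  qed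
  then show ?thesis unfolding induced_cycle_def using d bq l U by simp
qed

definition simpv :: "nat set set \<Rightarrow> nat set \<Rightarrow> nat \<Rightarrow> bool" where
  "simpv F U w \<longleftrightarrow> (\<forall>x\<in>U. \<forall>y\<in>U. adjF F w x \<longrightarrow> adjF F w y \<longrightarrow> x \<noteq> y \<longrightarrow> adjF F x y)"

lemma chordal_mono: "chordal U F \<Longrightarrow> U' \<subseteq> U \<Longrightarrow> chordal U' F"
  unfolding chordal_def induced_cycle_def by blast

inductive_set reachC :: "nat set set \<Rightarrow> nat set \<Rightarrow> nat \<Rightarrow> nat set" for F R a where
  base: "a \<in> R \<Longrightarrow> a \<in> reachC F R a"
| step: "c \<in> reachC F R a \<Longrightarrow> z \<in> R \<Longrightarrow> adjF F c z \<Longrightarrow> z \<in> reachC F R a"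

lemma reachC_sub: "c \<in> reachC F R a \<Longrightarrow> c \<in> R"
  by (induction rule: reachC.induct) auto

lemma reachC_walk: "c \<in> reachC F R a \<Longrightarrow>
  \<exists>p. p \<noteq> [] \<and> hd p = a \<and> last p = c \<and> successively (adjF F) p \<and> set p \<subseteq> reachC F R a"
proof (induction rule: reachC.induct)
  case base then show ?case by (intro exI[of _ "[a]"]) (auto intro: reachC.base)
next
  case (step c z)
  then obtain p where p: "p \<noteq> []" "hd p = a" "last p = c" "successively (adjF F) p"
    "set p \<subseteq> reachC F R a" by blast
  have "successively (adjF F) (p @ [z])" using p step by (simp add: successively_append_iff)
  moreover have "set (p @ [z]) \<subseteq> reachC F R a" using p step by (auto intro: reachC.step)
  ultimately show ?case using p by (intro exI[of _ "p @ [z]"]) auto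
qed

lemma clique_S:
  assumes ch: "chordal U F" and irr: "\<forall>z. {z} \<notin> F"
    and bU: "b \<in> U" and CR: "C \<subseteq> U - insert b {x. adjF F b x}"
    and conn: "\<And>c1 c2. c1 \<in> C \<Longrightarrow> c2 \<in> C \<Longrightarrow> \<exists>p. p \<noteq> [] \<and> hd p = c1 \<and> last p = c2
        \<and> successively (adjF F) p \<and> set p \<subseteq> C"
    and xU: "x \<in> U" "x \<notin> C" "adjF F b x" "c1 \<in> C" "adjF F x c1"
    and yU: "y \<in> U" "y \<notin> C" "adjF F b y" "c2 \<in> C" "adjF F y c2"
    and xy: "x \<noteq> y"
  shows "adjF F x y"
proof (rule ccontr)
  assume nxy: "\<not> adjF F x y"
  obtain p where p: "p \<noteq> []" "hd p = c1" "last p = c2" "successively (adjF F) p" "set p \<subseteq> C"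
    using conn xU(4) yU(4) by blast
  let ?w = "[x] @ p @ [y]"
  have "successively (adjF F) (p @ [y])" using p yU by (simp add: successively_append_iff adjF_sym)
  then have "successively (adjF F) ?w" using p xU by (simp add: successively_Cons)
  then have "goodpath F C x y ?w" using p unfolding goodpath_def by auto
  then obtain q where q: "goodpath F C x y q" "distinct q"
    "\<forall>i j. i < j \<longrightarrow> j < length q \<longrightarrow> adjF F (q!i) (q!j) \<longrightarrow> j = Suc i"
    using min_path irr by blast
  have sq: "successively (adjF F) q" and qne: "q \<noteq> []" and hq: "hd q = x" and lq: "last q = y"
    and setq: "set q \<subseteq> C \<union> {x, y}" using q(1) unfolding goodpath_def by auto
  have q0: "q!0 = x" using hq qne by (simp add: hd_conv_nth)
  have ql: "q!(length q - 1) = y" using lq qne by (simp add: last_conv_nth)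
  have len: "length q \<ge> 3"
  proof (rule ccontr)
    assume "\<not> length q \<ge> 3"
    moreover have "length q \<noteq> 0" using qne by simp
    ultimately have "length q = 1 \<or> length q = 2" by linarith
    then show False
    proof
      assume "length q = 1" then show False using q0 ql xy by simp
    next
      assume l2: "length q = 2" then have "adjF F (q!0) (q!1)" using successively_nth[OF sq, of 0] by simp
      then show False using q0 ql l2 nxy by simp
    qed
  qed
  have bC: "b \<notin> C" using CR by blast
  have bx: "b \<noteq> x" "b \<noteq> y" using xU(3) yU(3) irr by (auto simp: adjF_def)
  have bq: "b \<notin> set q" using setq bC bx by blast
  have bi: "\<forall>t. 0 < t \<longrightarrow> t < length q - 1 \<longrightarrow> \<not> adjF F b (q!t)"
  proof (intro allI impI)
    fix t assume t: "0 < t" "t < length q - 1"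
    then have "q!t \<in> set q" by simp
    moreover have "q!t \<noteq> x" using nth_eq_iff_index_eq[OF q(2), of t 0] t q0 qne by auto
    moreover have "q!t \<noteq> y" using nth_eq_iff_index_eq[OF q(2), of t "length q - 1"] t ql by auto
    ultimately have "q!t \<in> C" using setq by blast
    then show "\<not> adjF F b (q!t)" using CR by blast
  qed
  have U: "set (b # q) \<subseteq> U" using setq bU xU yU CR by auto
  have "induced_cycle U F (b # q)"
    by (rule cycle[OF q(2) len q(3) sq bq]) (use xU yU q0 ql bi U in auto)
  then have "length (b # q) = 3" using ch unfolding chordal_def by blast
  then show False using len by simp
qed

lemma adjF_sym_fun: "(\<lambda>x y. adjF F y x) = adjF F"
  by (auto simp: fun_eq_iff adjF_def insert_commute)

lemma reachC_conn:
  assumes "c1 \<in> reachC F R a" "c2 \<in> reachC F R a"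
  shows "\<exists>p. p \<noteq> [] \<and> hd p = c1 \<and> last p = c2 \<and> successively (adjF F) p \<and> set p \<subseteq> reachC F R a"
proof -
  obtain p1 where p1: "p1 \<noteq> []" "hd p1 = a" "last p1 = c1" "successively (adjF F) p1" "set p1 \<subseteq> reachC F R a"
    using reachC_walk[OF assms(1)] by blast
  obtain p2 where p2: "p2 \<noteq> []" "hd p2 = a" "last p2 = c2" "successively (adjF F) p2" "set p2 \<subseteq> reachC F R a"
    using reachC_walk[OF assms(2)] by blast
  obtain p2' where p2e: "p2 = a # p2'" using p2 by (cases p2) auto
  have s1: "successively (adjF F) (rev p1)" using p1(4) unfolding successively_rev adjF_sym_fun .
  have s2: "successively (adjF F) p2'" and j: "p2' = [] \<or> adjF F a (hd p2')"
    using p2(4) unfolding p2e by (auto simp: successively_Cons)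
  have lr: "last (rev p1) = a" using p1 by (simp add: last_rev)
  have "successively (adjF F) (rev p1 @ p2')" using s1 s2 j lr by (auto simp: successively_append_iff)
  moreover have "hd (rev p1 @ p2') = c1" using p1 by (simp add: hd_rev)
  moreover have "last (rev p1 @ p2') = c2"
    using p2 lr p1 unfolding p2e by (cases "p2' = []") auto
  moreover have "set (rev p1 @ p2') \<subseteq> reachC F R a" using p1 p2 unfolding p2e by auto
  ultimately show ?thesis using p1 by (intro exI[of _ "rev p1 @ p2'"]) auto
qed

lemma adjF_symI: "adjF F x y \<Longrightarrow> adjF F y x"
  using adjF_sym by blast

lemma dirac:
  assumes "finite U" "chordal U F" "\<forall>z. {z} \<notin> F" "b \<in> U" "a \<in> U" "a \<noteq> b" "\<not> adjF F a b"
  shows "\<exists>w\<in>U. w \<noteq> b \<and> \<not> adjF F w b \<and> simpv F U w"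
  using assms
proof (induction "card U" arbitrary: U a b rule: less_induct)
  case less
  note fin = less.prems(1) and ch = less.prems(2) and irr = less.prems(3)
  define R where "R = U - insert b {x. adjF F b x}"
  define C where "C = reachC F R a"
  have aR: "a \<in> R" using less.prems adjF_sym[of F b a] unfolding R_def by auto
  have aC: "a \<in> C" unfolding C_def using aR by (rule reachC.base)
  have CR: "C \<subseteq> R" unfolding C_def using reachC_sub by blast
  have Cstep: "\<And>c z. c \<in> C \<Longrightarrow> z \<in> R \<Longrightarrow> adjF F c z \<Longrightarrow> z \<in> C"
    unfolding C_def by (rule reachC.step)
  have conn: "\<exists>p. p \<noteq> [] \<and> hd p = c1 \<and> last p = c2 \<and> successively (adjF F) p \<and> set p \<subseteq> C"
    if "c1 \<in> C" "c2 \<in> C" for c1 c2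
    using reachC_conn[of c1 F R a c2] that unfolding C_def by blast
  define S where "S = {s\<in>U. s \<notin> C \<and> (\<exists>c\<in>C. adjF F s c)}"
  have CU: "C \<subseteq> U" using CR unfolding R_def by blast
  have Sb: "adjF F b s" if sS: "s \<in> S" for s
  proof -
    obtain c where c: "c \<in> C" "adjF F s c" "s \<in> U" "s \<notin> C" using sS unfolding S_def by blast
    have "s \<notin> R" using Cstep[of c s] c adjF_sym[of F s c] by auto
    then have "s = b \<or> adjF F b s" using c unfolding R_def by blast
    moreover have "s \<noteq> b" using c CR adjF_sym[of F s c] unfolding R_def by auto
    ultimately show ?thesis by blast
  qed
  have Scl: "adjF F x y" if xyS: "x \<in> S" "y \<in> S" "x \<noteq> y" for x y
  proof -
    obtain c1 where c1: "c1 \<in> C" "adjF F x c1" "x \<in> U" "x \<notin> C" using xyS unfolding S_def by blast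
    obtain c2 where c2: "c2 \<in> C" "adjF F y c2" "y \<in> U" "y \<notin> C" using xyS unfolding S_def by blast
    show ?thesis
      by (rule clique_S[OF ch irr less.prems(4) _ conn c1(3) c1(4) Sb[OF xyS(1)] c1(1) c1(2)
            c2(3) c2(4) Sb[OF xyS(2)] c2(1) c2(2) xyS(3)]) (use CR R_def in auto)
  qed
  define U' where "U' = C \<union> S"
  have U'U: "U' \<subseteq> U" using CU unfolding U'_def S_def by blast
  have bU': "b \<notin> U'"
  proof
    assume "b \<in> U'"
    then have "b \<in> C \<or> b \<in> S" unfolding U'_def by blast
    then show False
    proof
      assume "b \<in> C" then show False using CR unfolding R_def by blast
    next
      assume "b \<in> S" then have "adjF F b b" by (rule Sb)
      then show False using irr by (simp add: adjF_def)
    qed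
  qed
  have cardlt: "card U' < card U" using U'U bU' less.prems(4) fin
    by (intro psubset_card_mono) auto
  have finU': "finite U'" using U'U fin finite_subset by blast
  have chU': "chordal U' F" using chordal_mono[OF ch U'U] .
  have nbr: "z \<in> U'" if "w \<in> C" "z \<in> U" "adjF F w z" for w z
    using that adjF_sym[of F w z] unfolding U'_def S_def by auto
  have lift: "simpv F U w" if "w \<in> C" "simpv F U' w" for w
    using that nbr unfolding simpv_def by blast
  have good: "w \<noteq> b \<and> \<not> adjF F w b" if "w \<in> C" for w
    using that CR adjF_sym[of F w b] unfolding R_def by auto
  have "\<exists>w\<in>C. simpv F U' w"
  proof (cases "\<exists>s\<in>S. \<exists>t\<in>U'. t \<noteq> s \<and> \<not> adjF F t s")
    case True
    then obtain s t where st: "s \<in> S" "t \<in> U'" "t \<noteq> s" "\<not> adjF F t s" by blast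
    have sU': "s \<in> U'" using st unfolding U'_def by blast
    obtain w where w: "w \<in> U'" "w \<noteq> s" "\<not> adjF F w s" "simpv F U' w"
      using less.hyps[OF cardlt finU' chU' irr sU' st(2) st(3) st(4)] by blast
    have "w \<notin> S" using Scl[OF _ st(1)] w by blast
    then show ?thesis using w unfolding U'_def by blast
  next
    case nA: False
    show ?thesis
    proof (cases "\<exists>c\<in>C. \<exists>t\<in>U'. t \<noteq> c \<and> \<not> adjF F t c")
      case True
      then obtain c t where ct: "c \<in> C" "t \<in> U'" "t \<noteq> c" "\<not> adjF F t c" by blast
      have cU': "c \<in> U'" using ct unfolding U'_def by blast
      obtain w where w: "w \<in> U'" "w \<noteq> c" "\<not> adjF F w c" "simpv F U' w"
        using less.hyps[OF cardlt finU' chU' irr cU' ct(2) ct(3) ct(4)] by blast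
      have "w \<notin> S" using nA w cU' adjF_sym[of F c w] by auto
      then show ?thesis using w unfolding U'_def by blast
    next
      case False
      then have "\<forall>x\<in>U'. \<forall>y\<in>U'. x \<noteq> y \<longrightarrow> adjF F x y" using nA unfolding U'_def by blast
      then have "simpv F U' a" unfolding simpv_def by blast
      then show ?thesis using aC by blast
    qed
  qed
  then obtain w where "w \<in> C" "simpv F U' w" by blast
  then show ?case using lift good CU by blast
qed

lemma simplicial_exists:
  assumes "finite U" "chordal U F" "\<forall>z. {z} \<notin> F" "U \<noteq> {}"
  shows "\<exists>w\<in>U. simpv F U w"
proof (cases "\<exists>a\<in>U. \<exists>b\<in>U. a \<noteq> b \<and> \<not> adjF F a b")
  case True
  then obtain a b where "a \<in> U" "b \<in> U" "a \<noteq> b" "\<not> adjF F a b" by blast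
  then show ?thesis using dirac[OF assms(1-3)] by blast
next
  case False
  then have "simpv F U w" for w unfolding simpv_def by blast
  then show ?thesis using assms(4) by blast
qed

definition cliq :: "nat set set \<Rightarrow> nat set \<Rightarrow> bool" where
  "cliq F K \<longleftrightarrow> (\<forall>x\<in>K. \<forall>y\<in>K. x \<noteq> y \<longrightarrow> adjF F x y)"

lemma partition:
  assumes "finite U" "chordal U F" "\<forall>z. {z} \<notin> F"
  shows "\<exists>D. finite D \<and> (\<forall>p\<in>D. card (fst p) \<le> 1 \<and> fst p \<subseteq> snd p \<and> snd p \<subseteq> U \<and> cliq F (snd p))
    \<and> (\<forall>K. K \<subseteq> U \<longrightarrow> cliq F K \<longrightarrow> (\<exists>!p. p \<in> D \<and> fst p \<subseteq> K \<and> K \<subseteq> snd p))"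
  using assms
proof (induction "card U" arbitrary: U rule: less_induct)
  case less
  show ?case
  proof (cases "U = {}")
    case True
    show ?thesis
    proof (intro exI[of _ "{({}, {})}"] conjI ballI allI impI)
      fix K assume "K \<subseteq> U" "cliq F K"
      then have "K = {}" using True by blast
      then show "\<exists>!p. p \<in> {({}, {})} \<and> fst p \<subseteq> K \<and> K \<subseteq> snd p" by auto
    qed (auto simp: cliq_def)
  next
    case False
    obtain w where w: "w \<in> U" "simpv F U w" using simplicial_exists[OF less.prems(1-3) False] by blast
    define U0 where "U0 = U - {w}"
    have lt: "card U0 < card U" unfolding U0_def using less.prems(1) w(1) by (rule card_Diff1_less)
    have fin0: "finite U0" using less.prems(1) unfolding U0_def by simp
    have ch0: "chordal U0 F" using chordal_mono[OF less.prems(2), of U0] unfolding U0_def by blast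
    obtain D0 where D0all: "finite D0 \<and>
      (\<forall>p\<in>D0. card (fst p) \<le> 1 \<and> fst p \<subseteq> snd p \<and> snd p \<subseteq> U0 \<and> cliq F (snd p)) \<and>
      (\<forall>K. K \<subseteq> U0 \<longrightarrow> cliq F K \<longrightarrow> (\<exists>!p. p \<in> D0 \<and> fst p \<subseteq> K \<and> K \<subseteq> snd p))"
      using less.hyps[OF lt fin0 ch0 less.prems(3)] by (elim exE) (rule that)
    note D0 = D0all[THEN conjunct1] D0all[THEN conjunct2, THEN conjunct1] D0all[THEN conjunct2, THEN conjunct2]
    define N where "N = insert w {x\<in>U. adjF F w x}"
    define D where "D = insert ({w}, N) D0"
    have NU: "N \<subseteq> U" using w unfolding N_def by blast
    have Ncl: "cliq F N" unfolding cliq_def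
    proof (intro ballI impI)
      fix x y assume "x \<in> N" "y \<in> N" "x \<noteq> y"
      then consider "x = w" "adjF F w y" | "y = w" "adjF F w x" | "adjF F w x" "adjF F w y" "x \<in> U" "y \<in> U"
        unfolding N_def by blast
      then show "adjF F x y"
      proof cases
        case 2 then show ?thesis using adjF_sym by metis
      next
        case 3 then show ?thesis using w(2) \<open>x \<noteq> y\<close> unfolding simpv_def by blast
      qed simp
    qed
    have wD0: "w \<notin> snd p" if "p \<in> D0" for p using D0(2) that unfolding U0_def by blast
    show ?thesis
    proof (intro exI[of _ D] conjI)
      show "finite D" using D0(1) unfolding D_def by simp
      show "\<forall>p\<in>D. card (fst p) \<le> 1 \<and> fst p \<subseteq> snd p \<and> snd p \<subseteq> U \<and> cliq F (snd p)"
      proof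
        fix p assume "p \<in> D"
        then have "p = ({w}, N) \<or> p \<in> D0" unfolding D_def by blast
        then show "card (fst p) \<le> 1 \<and> fst p \<subseteq> snd p \<and> snd p \<subseteq> U \<and> cliq F (snd p)"
        proof
          assume "p = ({w}, N)"
          moreover have "w \<in> N" unfolding N_def by blast
          ultimately show ?thesis using NU Ncl by simp
        next
          assume "p \<in> D0"
          then show ?thesis using D0(2) unfolding U0_def by blast
        qed
      qed
      show "\<forall>K. K \<subseteq> U \<longrightarrow> cliq F K \<longrightarrow> (\<exists>!p. p \<in> D \<and> fst p \<subseteq> K \<and> K \<subseteq> snd p)"
      proof (intro allI impI)
        fix K assume KU: "K \<subseteq> U" and Kc: "cliq F K"
        show "\<exists>!p. p \<in> D \<and> fst p \<subseteq> K \<and> K \<subseteq> snd p"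
        proof (cases "w \<in> K")
          case True
          have "K \<subseteq> N"
          proof
            fix x assume "x \<in> K"
            show "x \<in> N"
            proof (cases "x = w")
              case False
              then have "adjF F w x" using Kc True \<open>x \<in> K\<close> unfolding cliq_def by metis
              then show ?thesis using KU \<open>x \<in> K\<close> unfolding N_def by blast
            qed (simp add: N_def)
          qed
          then have ex: "({w}, N) \<in> D \<and> fst ({w}, N) \<subseteq> K \<and> K \<subseteq> snd ({w}, N)"
            using True unfolding D_def by simp
          show ?thesis
          proof (rule ex1I[of _ "({w}, N)"])
            show "({w}, N) \<in> D \<and> fst ({w}, N) \<subseteq> K \<and> K \<subseteq> snd ({w}, N)" by (rule ex)
          next
            fix p assume p: "p \<in> D \<and> fst p \<subseteq> K \<and> K \<subseteq> snd p"
            then have "p \<notin> D0" using wD0 True by blast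
            then show "p = ({w}, N)" using p unfolding D_def by blast
          qed
        next
          case False
          then have "K \<subseteq> U0" using KU unfolding U0_def by blast
          then obtain p where p: "p \<in> D0" "fst p \<subseteq> K" "K \<subseteq> snd p"
            and u: "\<And>q. q \<in> D0 \<and> fst q \<subseteq> K \<and> K \<subseteq> snd q \<Longrightarrow> q = p"
            using D0(3) Kc by metis
          show ?thesis
          proof (rule ex1I[of _ p])
            show "p \<in> D \<and> fst p \<subseteq> K \<and> K \<subseteq> snd p" using p unfolding D_def by blast
          next
            fix q assume q: "q \<in> D \<and> fst q \<subseteq> K \<and> K \<subseteq> snd q"
            then have "q \<noteq> ({w}, N)" using False by auto
            then have "q \<in> D0" using q unfolding D_def by blast
            then show "q = p" using u q by blast
          qed
        qed
      qed
    qed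
  qed
qed

lemma piece_iff:
  assumes "u \<subseteq> Z"
  shows "f \<in> stanley_piece u Z \<longleftrightarrow> u \<subseteq> {v. f v \<noteq> 0} \<and> {v. f v \<noteq> 0} \<subseteq> Z"
proof
  assume "f \<in> stanley_piece u Z"
  then obtain m where m: "monomial_in Z m" "f = (\<lambda>v. (if v \<in> u then 1 else 0) + m v)"
    unfolding stanley_piece_def by blast
  show "u \<subseteq> {v. f v \<noteq> 0} \<and> {v. f v \<noteq> 0} \<subseteq> Z"
    using m assms unfolding monomial_in_def by auto
next
  assume h: "u \<subseteq> {v. f v \<noteq> 0} \<and> {v. f v \<noteq> 0} \<subseteq> Z"
  define m where "m = (\<lambda>v. f v - (if v \<in> u then 1 else 0))"
  have "monomial_in Z m" using h unfolding monomial_in_def m_def by auto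
  moreover have "f = (\<lambda>v. (if v \<in> u then 1 else 0) + m v)"
    using h unfolding m_def by (auto simp: fun_eq_iff)
  ultimately show "f \<in> stanley_piece u Z" unfolding stanley_piece_def by blast
qed

lemma std_iff:
  assumes sg: "simple_graph n V E"
  shows "std_monomial n E f \<longleftrightarrow> {v. f v \<noteq> 0} \<subseteq> {1..n} \<and> cliq (complement_edges V E) ({v. f v \<noteq> 0} \<inter> V)"
proof -
  have m: "monomial_in {1..n} f \<longleftrightarrow> {v. f v \<noteq> 0} \<subseteq> {1..n}" unfolding monomial_in_def by auto
  have e: "(\<forall>e\<in>E. \<not> (\<forall>v\<in>e. 1 \<le> f v)) \<longleftrightarrow> cliq (complement_edges V E) ({v. f v \<noteq> 0} \<inter> V)"
  proof
    assume h: "\<forall>e\<in>E. \<not> (\<forall>v\<in>e. 1 \<le> f v)"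
    show "cliq (complement_edges V E) ({v. f v \<noteq> 0} \<inter> V)" unfolding cliq_def
    proof (intro ballI impI)
      fix x y assume x: "x \<in> {v. f v \<noteq> 0} \<inter> V" and y: "y \<in> {v. f v \<noteq> 0} \<inter> V" and xy: "x \<noteq> y"
      have "{x, y} \<notin> E" using h x y by auto
      then show "adjF (complement_edges V E) x y"
        unfolding adjF_def complement_edges_def using x y xy by blast
    qed
  next
    assume c: "cliq (complement_edges V E) ({v. f v \<noteq> 0} \<inter> V)"
    show "\<forall>e\<in>E. \<not> (\<forall>v\<in>e. 1 \<le> f v)"
    proof (intro ballI notI)
      fix e assume eE: "e \<in> E" and all: "\<forall>v\<in>e. 1 \<le> f v"
      have "card e = 2" "e \<subseteq> V" using sg eE unfolding simple_graph_def by auto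
      then obtain x y where xy: "e = {x, y}" "x \<noteq> y" by (meson card_2_iff)
      have "x \<in> {v. f v \<noteq> 0} \<inter> V" "y \<in> {v. f v \<noteq> 0} \<inter> V" using all xy \<open>e \<subseteq> V\<close> by auto
      then have "{x, y} \<in> complement_edges V E" using c xy(2) unfolding cliq_def adjF_def by blast
      then obtain a b where "{x, y} = {a, b}" "{a, b} \<notin> E" unfolding complement_edges_def by blast
      then show False using eE xy by simp
    qed
  qed
  show ?thesis unfolding std_monomial_def using m e by simp
qed

lemma main:
  fixes n :: nat and V :: "nat set" and E :: "nat set set"
  assumes sg: "simple_graph n V E" and cc: "co_chordal V E"
  shows "\<exists>D. sqfree_stanley_decomp n E D \<and> (\<forall>(u, Z) \<in> D. card u \<le> 1)"
proof -
  define F where "F = complement_edges V E"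
  define C0 where "C0 = {1..n} - V"
  have VW: "V \<subseteq> {1..n}" using sg unfolding simple_graph_def by blast
  have finV: "finite V" using VW finite_subset by blast
  have chF: "chordal V F" using cc unfolding co_chordal_def F_def .
  have irr: "\<forall>z. {z} \<notin> F" unfolding F_def complement_edges_def by (auto simp: doubleton_eq_iff)
  obtain D where Dall: "finite D \<and>
    (\<forall>p\<in>D. card (fst p) \<le> 1 \<and> fst p \<subseteq> snd p \<and> snd p \<subseteq> V \<and> cliq F (snd p)) \<and>
    (\<forall>K. K \<subseteq> V \<longrightarrow> cliq F K \<longrightarrow> (\<exists>!p. p \<in> D \<and> fst p \<subseteq> K \<and> K \<subseteq> snd p))"
    using partition[OF finV chF irr] by (elim exE) (rule that)
  note D = Dall[THEN conjunct1] Dall[THEN conjunct2, THEN conjunct1] Dall[THEN conjunct2, THEN conjunct2]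
  define g where "g = (\<lambda>p :: nat set \<times> nat set. (fst p, snd p \<union> C0))"
  define D' where "D' = g ` D"
  have std: "std_monomial n E f \<longleftrightarrow> {v. f v \<noteq> 0} \<subseteq> {1..n} \<and> cliq F ({v. f v \<noteq> 0} \<inter> V)" for f
    using std_iff[OF sg] unfolding F_def .
  have memb: "f \<in> stanley_piece (fst (g p)) (snd (g p)) \<longleftrightarrow>
      fst p \<subseteq> {v. f v \<noteq> 0} \<inter> V \<and> {v. f v \<noteq> 0} \<inter> V \<subseteq> snd p"
    if "p \<in> D" "{v. f v \<noteq> 0} \<subseteq> {1..n}" for p f
  proof -
    have "fst p \<subseteq> snd p" "snd p \<subseteq> V" using D(2) that(1) by auto
    then have "f \<in> stanley_piece (fst (g p)) (snd (g p)) \<longleftrightarrow>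
        fst p \<subseteq> {v. f v \<noteq> 0} \<and> {v. f v \<noteq> 0} \<subseteq> snd p \<union> C0"
      using piece_iff[of "fst p" "snd p \<union> C0" f] unfolding g_def by auto
    also have "\<dots> \<longleftrightarrow> fst p \<subseteq> {v. f v \<noteq> 0} \<inter> V \<and> {v. f v \<noteq> 0} \<inter> V \<subseteq> snd p"
      using \<open>fst p \<subseteq> snd p\<close> \<open>snd p \<subseteq> V\<close> that(2) unfolding C0_def by blast
    finally show ?thesis .
  qed
  have "sqfree_stanley_decomp n E D'"
    unfolding sqfree_stanley_decomp_def
  proof (intro conjI)
    show "finite D'" unfolding D'_def using D(1) by simp
    show "\<forall>(u, Z)\<in>D'. Z \<subseteq> {1..n} \<and> u \<subseteq> Z \<and> stanley_piece u Z \<subseteq> Collect (std_monomial n E)"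
    proof (intro ballI)
      fix x assume "x \<in> D'"
      then obtain p where p: "p \<in> D" "x = g p" unfolding D'_def by blast
      have p2: "fst p \<subseteq> snd p" "snd p \<subseteq> V" "cliq F (snd p)" using D(2) p(1) by auto
      have "snd (g p) \<subseteq> {1..n}" using p2 VW unfolding g_def C0_def by auto
      moreover have "fst (g p) \<subseteq> snd (g p)" using p2 unfolding g_def by auto
      moreover have "stanley_piece (fst (g p)) (snd (g p)) \<subseteq> Collect (std_monomial n E)"
      proof
        fix f assume f: "f \<in> stanley_piece (fst (g p)) (snd (g p))"
        then have s: "{v. f v \<noteq> 0} \<subseteq> snd (g p)" using piece_iff[of "fst (g p)" "snd (g p)" f]
            \<open>fst (g p) \<subseteq> snd (g p)\<close> by blast
        then have sW: "{v. f v \<noteq> 0} \<subseteq> {1..n}" using \<open>snd (g p) \<subseteq> {1..n}\<close> by blast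
        have "{v. f v \<noteq> 0} \<inter> V \<subseteq> snd p" using memb[OF p(1) sW] f by blast
        then have "cliq F ({v. f v \<noteq> 0} \<inter> V)" using p2(3) unfolding cliq_def by blast
        then show "f \<in> Collect (std_monomial n E)" using std sW by blast
      qed
      ultimately show "case x of (u, Z) \<Rightarrow> Z \<subseteq> {1..n} \<and> u \<subseteq> Z \<and> stanley_piece u Z \<subseteq> Collect (std_monomial n E)"
        using p(2) by (cases "g p") simp
    qed
    show "\<forall>f. std_monomial n E f \<longrightarrow> (\<exists>!p. p \<in> D' \<and> f \<in> stanley_piece (fst p) (snd p))"
    proof (intro allI impI)
      fix f assume "std_monomial n E f"
      then have sW: "{v. f v \<noteq> 0} \<subseteq> {1..n}" and cl: "cliq F ({v. f v \<noteq> 0} \<inter> V)" using std by auto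
      obtain p where p: "p \<in> D" "fst p \<subseteq> {v. f v \<noteq> 0} \<inter> V" "{v. f v \<noteq> 0} \<inter> V \<subseteq> snd p"
        and u: "\<And>q. q \<in> D \<and> fst q \<subseteq> {v. f v \<noteq> 0} \<inter> V \<and> {v. f v \<noteq> 0} \<inter> V \<subseteq> snd q \<Longrightarrow> q = p"
        using D(3)[rule_format, of "{v. f v \<noteq> 0} \<inter> V", OF _ cl] by (metis Int_lower2)
      show "\<exists>!p. p \<in> D' \<and> f \<in> stanley_piece (fst p) (snd p)"
      proof (rule ex1I[of _ "g p"])
        show "g p \<in> D' \<and> f \<in> stanley_piece (fst (g p)) (snd (g p))"
          using memb[OF p(1) sW] p unfolding D'_def by blast
      next
        fix x assume x: "x \<in> D' \<and> f \<in> stanley_piece (fst x) (snd x)"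
        then obtain q where q: "q \<in> D" "x = g q" unfolding D'_def by blast
        then have "fst q \<subseteq> {v. f v \<noteq> 0} \<inter> V \<and> {v. f v \<noteq> 0} \<inter> V \<subseteq> snd q"
          using memb[OF q(1) sW] x by blast
        then have "q = p" using u q(1) by blast
        then show "x = g p" using q(2) by simp
      qed
    qed
  qed
  moreover have "\<forall>(u, Z) \<in> D'. card u \<le> 1" using D(2) unfolding D'_def g_def by auto
  ultimately show ?thesis by blast
qed

theorem theorem5p5:
  fixes n :: nat and V :: "nat set" and E :: "nat set set"
  assumes "simple_graph n V E"
    and "co_chordal V E"
    and "E \<noteq> {}"
  shows "sreg n E \<le> 1"
proof -
  obtain D where "sqfree_stanley_decomp n E D" "\<forall>(u, Z) \<in> D. card u \<le> 1"
    using main[OF assms(1,2)] by blast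
  then show ?thesis unfolding sreg_def by (intro Least_le) blast
qed

end
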